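(* The monoid $\operatorname{NDPF}^{(1)}_N$ is generated by the functions $f_0,\dots,f_{N-1}$, and these satisfy the relations $f_i^2=f_i$; $f_if_j=f_jf_i$ whenever $i,j$ are not adjacent modulo $N$; and $f_if_{i+1}f_i=f_{i+1}f_if_{i+1}=f_{i+1}f_i$, with indices taken modulo $N$.
   Context: $\operatorname{NDPF}^{(1)}_N$ is the set of functions $f:\mathbb{Z}\to\mathbb{Z}$ that are regressive ($f(i)\le i$), order preserving ($i\le j\Rightarrow f(i)\le f(j)$) and skew periodic ($f(i+N)=f(i)+N$), excluding the shift functions $i\mapsto i-t$ with $t\neq0$; it is a monoid under composition, with functions acting on the right: $fg$ means apply $f$ first, then $g$. For $i\in\{0,\dots,N-1\}$, $f_i(j)=j-1$ if $j\equiv i+1 \pmod N$ and $f_i(j)=j$ otherwise. *)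

theory Defs
  imports Main
begin

definition NDPF :: "nat \<Rightarrow> (int \<Rightarrow> int) set" where
  "NDPF N = {f. (\<forall>i. f i \<le> i)
              \<and> (\<forall>i j. i \<le> j \<longrightarrow> f i \<le> f j)
              \<and> (\<forall>i. f (i + int N) = f i + int N)
              \<and> \<not> (\<exists>t. t \<noteq> 0 \<and> (\<forall>i. f i = i - t))}"

definition fgen :: "nat \<Rightarrow> nat \<Rightarrow> int \<Rightarrow> int" where
  "fgen N i j = (if j mod int N = int ((i + 1) mod N) then j - 1 else j)"

text \<open>Monoid product with right action: mul f g means "apply f first, then g".\<close>
definition mul :: "(int \<Rightarrow> int) \<Rightarrow> (int \<Rightarrow> int) \<Rightarrow> (int \<Rightarrow> int)" where
  "mul f g = g \<circ> f"

fun word :: "nat \<Rightarrow> nat list \<Rightarrow> (int \<Rightarrow> int)" where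
  "word N [] = id"
| "word N (i # is) = mul (fgen N i) (word N is)"

end

theory Submission
  imports Defs
begin


lemma modL1:
  assumes "0 < N" "i < N" "y mod int N = int ((i+1) mod N)"
  shows "(y-1) mod int N = int i"
proof -
  have "(y-1) mod int N = (y mod int N - 1) mod int N" by (simp add: mod_diff_left_eq)
  also have "\<dots> = ((int i + 1) mod int N - 1) mod int N" using assms by (simp add: zmod_int add.commute)
  also have "\<dots> = int i mod int N" by (metis add_diff_cancel_right' mod_diff_left_eq)
  also have "\<dots> = int i" using assms by simp
  finally show ?thesis .
qed

lemma sucmod: "(i::nat) < N \<Longrightarrow> (i + 1) mod N = (if i + 1 = N then 0 else i + 1)"
proof (cases "i + 1 = N")
  case True
  hence "(i + 1) mod N = N mod N" by simp
  also have "\<dots> = 0" by (rule mod_self)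
  finally show ?thesis using True by simp
next
  case False
  assume "i < N"
  hence "i + 1 < N" using False by simp
  thus ?thesis using False by simp
qed

lemma modneq:
  assumes "N \<ge> 2" "i < N"
  shows "int i \<noteq> int ((i+1) mod N)"
proof
  assume "int i = int ((i+1) mod N)"
  hence "i = (i+1) mod N" by simp
  thus False using assms sucmod[OF assms(2)] by (simp split: if_splits)
qed

lemma idem: "N \<ge> 2 \<Longrightarrow> i < N \<Longrightarrow> mul (fgen N i) (fgen N i) = fgen N i"
  unfolding mul_def fgen_def
  using modL1[of N i] modneq[of N i] by (auto simp: fun_eq_iff)

lemma idx_inj: "i < N \<Longrightarrow> j < N \<Longrightarrow> int ((i+1) mod N) = int ((j+1) mod N) \<Longrightarrow> i = j"
  using sucmod[of i N] sucmod[of j N] by (simp split: if_splits)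

lemma comm: assumes "N \<ge> 2" "i < N" "j < N" "j \<noteq> (i + 1) mod N" "i \<noteq> (j + 1) mod N"
  shows "mul (fgen N i) (fgen N j) = mul (fgen N j) (fgen N i)"
proof (cases "i = j")
  case True thus ?thesis by simp
next
  case False
  show ?thesis unfolding mul_def fgen_def fun_eq_iff comp_def
  proof
    fix y
    consider "y mod int N = int ((i+1) mod N)" | "y mod int N = int ((j+1) mod N)"
      | "y mod int N \<noteq> int ((i+1) mod N)" "y mod int N \<noteq> int ((j+1) mod N)" by blast
    thus "(if (if y mod int N = int ((i + 1) mod N) then y - 1 else y) mod int N = int ((j + 1) mod N)
          then (if y mod int N = int ((i + 1) mod N) then y - 1 else y) - 1
          else if y mod int N = int ((i + 1) mod N) then y - 1 else y) =
         (if (if y mod int N = int ((j + 1) mod N) then y - 1 else y) mod int N = int ((i + 1) mod N)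
          then (if y mod int N = int ((j + 1) mod N) then y - 1 else y) - 1
          else if y mod int N = int ((j + 1) mod N) then y - 1 else y)"
    proof cases
      case 1
      have a: "y mod int N \<noteq> int ((j+1) mod N)" using 1 idx_inj[OF assms(2,3)] False by auto
      have "(y-1) mod int N = int i" using modL1[of N i y] 1 assms by simp
      hence "(y-1) mod int N \<noteq> int ((j+1) mod N)" using assms(5) by simp
      thus ?thesis using 1 a by simp
    next
      case 2
      have a: "y mod int N \<noteq> int ((i+1) mod N)" using 2 idx_inj[OF assms(2,3)] False by auto
      have "(y-1) mod int N = int j" using modL1[of N j y] 2 assms by simp
      hence "(y-1) mod int N \<noteq> int ((i+1) mod N)" using assms(4) by simp
      thus ?thesis using 2 a by simp
    qed simp
  qed
qed

lemma braid: assumes "N \<ge> 3" "i < N"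
  shows "mul (mul (fgen N i) (fgen N ((i + 1) mod N))) (fgen N i)
                 = mul (fgen N ((i + 1) mod N)) (fgen N i)
             \<and> mul (mul (fgen N ((i + 1) mod N)) (fgen N i)) (fgen N ((i + 1) mod N))
                 = mul (fgen N ((i + 1) mod N)) (fgen N i)"
proof -
  define k where "k = (i+1) mod N"
  have kN: "k < N" using assms k_def by simp
  have ik: "i \<noteq> k" using modneq[of N i] assms k_def by simp
  have k1: "(k+1) mod N = (i+2) mod N" unfolding k_def by (simp add: mod_Suc_eq)
  have ik2: "i \<noteq> (k+1) mod N"
  proof (cases "i + 2 < N")
    case True thus ?thesis using k1 by simp
  next
    case False
    hence "(i+2) mod N = i + 2 - N" using assms by (simp add: le_mod_geq)
    thus ?thesis using k1 assms False by simp
  qed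
  define m where "m = (k+1) mod N"
  have mN: "m < N" using assms m_def by simp
  have km: "int k \<noteq> int m" using modneq[of N k] assms kN m_def by simp
  have im: "int i \<noteq> int m" using ik2 m_def by simp
  have ik': "int i \<noteq> int k" using ik by simp
  have A: "\<And>y. y mod int N = int k \<Longrightarrow> (y-1) mod int N = int i"
    using modL1[of N i] assms k_def by simp
  have B: "\<And>y. y mod int N = int m \<Longrightarrow> (y-1) mod int N = int k"
    using modL1[of N k] assms m_def kN by simp
  have C: "\<And>y. y mod int N = int m \<Longrightarrow> (y-1-1) mod int N = int i"
    using A B by blast
  have hi: "\<And>y. y mod int N = int k \<Longrightarrow> fgen N i y = y - 1" unfolding fgen_def k_def by simp
  have mi: "\<And>y. y mod int N \<noteq> int k \<Longrightarrow> fgen N i y = y" unfolding fgen_def k_def by simp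
  have hk: "\<And>y. y mod int N = int m \<Longrightarrow> fgen N k y = y - 1" unfolding fgen_def m_def by simp
  have mk: "\<And>y. y mod int N \<noteq> int m \<Longrightarrow> fgen N k y = y" unfolding fgen_def m_def by simp
  have e1: "\<And>y. fgen N i (fgen N k (fgen N i y)) = fgen N i (fgen N k y)"
   and e2: "\<And>y. fgen N k (fgen N i (fgen N k y)) = fgen N i (fgen N k y)"
  proof -
    fix y
    consider (K) "y mod int N = int k" | (M) "y mod int N = int m" | (O) "y mod int N \<noteq> int k" "y mod int N \<noteq> int m" by blast
    hence "fgen N i (fgen N k (fgen N i y)) = fgen N i (fgen N k y) \<and> fgen N k (fgen N i (fgen N k y)) = fgen N i (fgen N k y)"
    proof cases
      case K
      have 1: "fgen N i y = y - 1" using hi K by blast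
      have 2: "fgen N k y = y" using mk K km by simp
      have 3: "(y-1) mod int N = int i" using A K by blast
      have 4: "fgen N k (y-1) = y-1" using mk 3 im by simp
      have 5: "fgen N i (y-1) = y-1" using mi 3 ik' by simp
      show ?thesis using 1 2 4 5 by simp
    next
      case M
      have 1: "fgen N i y = y" using mi M km by simp
      have 2: "fgen N k y = y - 1" using hk M by blast
      have 3: "(y-1) mod int N = int k" using B M by blast
      have 4: "fgen N i (y-1) = y-1-1" using hi 3 by blast
      have 6: "(y-1-1) mod int N = int i" using C M by blast
      have 5: "fgen N k (y-1-1) = y-1-1" using mk 6 im by simp
      show ?thesis using 1 2 4 5 by simp
    next
      case O
      show ?thesis using O mi mk by simp
    qed
    thus "fgen N i (fgen N k (fgen N i y)) = fgen N i (fgen N k y)" "fgen N k (fgen N i (fgen N k y)) = fgen N i (fgen N k y)" by auto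
  qed
  show ?thesis unfolding mul_def k_def[symmetric] using e1 e2 by (simp add: fun_eq_iff)
qed


lemma fgen_reg: "fgen N i y \<le> y" unfolding fgen_def by simp
lemma fgen_mono: "a \<le> b \<Longrightarrow> fgen N i a \<le> fgen N i b"
  unfolding fgen_def by (cases "a = b") auto
lemma fgen_skew: "fgen N i (y + int N) = fgen N i y + int N"
  unfolding fgen_def by simp

lemma fgen_noninj: assumes "N \<ge> 2" "i < N" shows "\<not> inj (fgen N i)"
proof -
  have a: "fgen N i (int i + 1) = int i"
    using assms unfolding fgen_def by (simp add: zmod_int add.commute)
  have b: "fgen N i (int i) = int i"
    using assms modneq[of N i] unfolding fgen_def by simp
  show ?thesis using a b unfolding inj_def by (metis add_cancel_left_right zero_neq_one)
qed

lemma word_props: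
  assumes "N \<ge> 2" "set w \<subseteq> {..<N}"
  shows "(\<forall>i. word N w i \<le> i) \<and> (\<forall>i j. i \<le> j \<longrightarrow> word N w i \<le> word N w j)
     \<and> (\<forall>i. word N w (i + int N) = word N w i + int N) \<and> (w = [] \<or> \<not> inj (word N w))"
  using assms(2)
proof (induction w)
  case Nil thus ?case by simp
next
  case (Cons a w)
  hence IH: "(\<forall>i. word N w i \<le> i) \<and> (\<forall>i j. i \<le> j \<longrightarrow> word N w i \<le> word N w j)
     \<and> (\<forall>i. word N w (i + int N) = word N w i + int N)" by simp
  have aN: "a < N" using Cons.prems by simp
  have e: "word N (a # w) = word N w \<circ> fgen N a" by (simp add: mul_def)
  have 1: "\<forall>i. word N (a#w) i \<le> i" using IH fgen_reg unfolding e by (metis comp_apply order_trans)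
  have 2: "\<forall>i j. i \<le> j \<longrightarrow> word N (a#w) i \<le> word N (a#w) j" using IH fgen_mono unfolding e by simp
  have 3: "\<forall>i. word N (a#w) (i + int N) = word N (a#w) i + int N" using IH fgen_skew unfolding e by simp
  have 4: "\<not> inj (word N (a#w))" using fgen_noninj[OF assms(1) aN] unfolding e
    using inj_on_imageI2 by blast
  show ?case using 1 2 3 4 by blast
qed

lemma word_in: assumes "N \<ge> 2" "set w \<subseteq> {..<N}" shows "word N w \<in> NDPF N"
proof -
  note P = word_props[OF assms]
  have "\<not> (\<exists>t. t \<noteq> 0 \<and> (\<forall>i. word N w i = i - t))"
  proof
    assume "\<exists>t. t \<noteq> 0 \<and> (\<forall>i. word N w i = i - t)"
    then obtain t where t: "t \<noteq> 0" "\<forall>i. word N w i = i - t" by blast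
    have "inj (word N w)" using t(2) unfolding inj_def by simp
    hence "w = []" using P by blast
    hence "\<forall>i. i = i - t" using t(2) by simp
    thus False using t(1) by simp
  qed
  thus ?thesis using P unfolding NDPF_def by blast
qed

lemma skew_mult:
  assumes "\<forall>i. f (i + int N) = f i + int N"
  shows "f (y + int N * q) = f y + int N * q"
proof -
  have n: "f (y + int N * int n) = f y + int N * int n" for n y
  proof (induction n arbitrary: y)
    case 0 thus ?case by simp
  next
    case (Suc n y)
    have e: "y + int N * int (Suc n) = (y + int N * int n) + int N" by (simp add: algebra_simps)
    have "f (y + int N * int (Suc n)) = f ((y + int N * int n) + int N)" using e by (rule arg_cong)
    also have "\<dots> = f (y + int N * int n) + int N" using assms by blast
    also have "\<dots> = f y + int N * int n + int N" using Suc.IH by simp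
    also have "\<dots> = f y + int N * int (Suc n)" by (simp add: algebra_simps)
    finally show ?case .
  qed
  show ?thesis
  proof (cases "q \<ge> 0")
    case True
    then obtain n where "q = int n" using nonneg_int_cases by blast
    thus ?thesis using n by simp
  next
    case False
    define n where "n = nat (- q)"
    have q: "q = - int n" using False n_def by simp
    have "f y = f ((y + int N * q) + int N * int n)" using q by simp
    also have "\<dots> = f (y + int N * q) + int N * int n" using n by blast
    finally show ?thesis using q by simp
  qed
qed

lemma modeq_shift: fixes a b m :: int
  assumes "a mod m = b mod m" shows "a = b + m * (a div m - b div m)"
proof -
  have h1: "a = m * (a div m) + a mod m" by simp
  have h2: "b = m * (b div m) + b mod m" by simp
  have h: "m * (a div m - b div m) = m * (a div m) - m * (b div m)" by (simp add: right_diff_distrib)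
  show ?thesis using h1 h2 h assms by linarith
qed

lemma noninj:
  assumes f: "f \<in> NDPF N" and N: "N \<ge> 1" and ne: "f \<noteq> id"
  shows "\<exists>z. f (z - 1) = f z"
proof (rule ccontr)
  assume H: "\<not> (\<exists>z. f (z - 1) = f z)"
  have reg: "\<forall>i. f i \<le> i" and mono: "\<forall>i j. i \<le> j \<longrightarrow> f i \<le> f j"
    and skew: "\<forall>i. f (i + int N) = f i + int N"
    and ns: "\<not> (\<exists>t. t \<noteq> 0 \<and> (\<forall>i. f i = i - t))" using f unfolding NDPF_def by auto
  have S: "f z + 1 \<le> f (z + 1)" for z
  proof -
    have "f z \<le> f (z+1)" using mono by simp
    moreover have "f (z + 1 - 1) \<noteq> f (z+1)" using H by blast
    ultimately show ?thesis by simp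
  qed
  have G: "f z + int n \<le> f (z + int n)" for z n
  proof (induction n)
    case 0 thus ?case by simp
  next
    case (Suc n)
    have "f (z + int n) + 1 \<le> f (z + int n + 1)" using S by blast
    moreover have "f (z + int (Suc n)) = f (z + int n + 1)"
    proof -
      have "z + int (Suc n) = z + int n + 1" by simp
      thus ?thesis by (rule arg_cong)
    qed
    ultimately show ?case using Suc.IH by simp
  qed
  have E: "f (z + 1) = f z + 1" for z
  proof (rule ccontr)
    assume "f (z + 1) \<noteq> f z + 1"
    hence "f (z+1) \<ge> f z + 2" using S[of z] by simp
    moreover have "f (z + 1) + int (N - 1) \<le> f (z + 1 + int (N - 1))" using G by blast
    moreover have "z + 1 + int (N - 1) = z + int N" using N by simp
    ultimately have "f z + int N + 1 \<le> f (z + int N)" using N by simp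
    thus False using skew by simp
  qed
  have L: "f z = f 0 + z" for z
  proof (induction z rule: int_induct[where k=0])
    case base thus ?case by simp
  next
    case (step1 i) thus ?case using E by simp
  next
    case (step2 i) thus ?case using E[of "i - 1"] by simp
  qed
  have a: "\<forall>i. f i = i - (- f 0)"
  proof
    fix i show "f i = i - (- f 0)" using L[of i] by linarith
  qed
  have "- f 0 = 0"
  proof (rule ccontr)
    assume A: "- f 0 \<noteq> 0"
    have c: "- f 0 \<noteq> 0 \<and> (\<forall>i. f i = i - (- f 0))" using A a by (rule conjI)
    hence "\<exists>t. t \<noteq> 0 \<and> (\<forall>i. f i = i - t)" by (rule exI)
    with ns show False by (rule notE)
  qed
  hence "f = id"
  proof -
    assume h: "- f 0 = 0"
    show "f = id"
    proof (rule ext)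
      fix i have "f i = i" using L[of i] h by linarith
      thus "f i = id i" by simp
    qed
  qed
  thus False using ne by simp
qed

lemma walk: "P 0 \<Longrightarrow> \<not> P n \<Longrightarrow> \<exists>k<n. P k \<and> \<not> P (Suc k)"
proof (induction n)
  case 0 thus ?case by simp
next
  case (Suc n)
  show ?case
  proof (cases "P n")
    case True thus ?thesis using Suc.prems by blast
  next
    case False thus ?thesis using Suc by (metis less_Suc_eq)
  qed
qed



definition DD :: "nat \<Rightarrow> (int \<Rightarrow> int) \<Rightarrow> int" where
  "DD N f = (\<Sum>y\<in>{0..<int N}. y - f y)"

lemma step:
  assumes f: "f \<in> NDPF N" and N: "N \<ge> 3" and ne: "f \<noteq> id"
  shows "\<exists>g i. g \<in> NDPF N \<and> i < N \<and> f = mul (fgen N i) g \<and> 0 \<le> DD N g \<and> DD N g < DD N f"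
proof -
  have reg: "\<forall>i. f i \<le> i" and mono: "\<forall>i j. i \<le> j \<longrightarrow> f i \<le> f j"
    and skew: "\<forall>i. f (i + int N) = f i + int N" using f unfolding NDPF_def by auto
  obtain z where z: "f (z - 1) = f z" using noninj[OF f _ ne] N by auto
  have P0: "f (z + int 0) = f (z - 1)" using z by simp
  have PN: "\<not> f (z + int N) = f (z - 1)" using skew z N by simp
  obtain k where k: "k < N" "f (z + int k) = f (z - 1)" "f (z + int (Suc k)) \<noteq> f (z - 1)"
    using walk[where P="\<lambda>k. f (z + int k) = f (z - 1)", OF P0 PN] by blast
  define x where "x = z + int k"
  have x1: "f (x - 1) = f x"
  proof -
    have "f (z - 1) \<le> f (x - 1)" using mono x_def by simp
    moreover have "f (x - 1) \<le> f x" using mono by simp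
    ultimately show ?thesis using k(2) x_def by simp
  qed
  have x2: "f x < f (x + 1)"
  proof -
    have "f x \<le> f (x + 1)" using mono by simp
    moreover have "x + 1 = z + int (Suc k)" using x_def by simp
    hence "f (x + 1) = f (z + int (Suc k))" by (rule arg_cong)
    hence "f (x + 1) \<noteq> f x" using k(2,3) x_def by simp
    ultimately show ?thesis by simp
  qed
  have x3: "f x < x" using x1 reg[rule_format, of "x - 1"] by simp
  define g where "g y = (if y mod int N = x mod int N then min y (f (y + 1)) else f y)" for y
  have Npos: "0 < N" using N by simp
  have cls: "f y < y \<and> f y < f (y + 1) \<and> f (y - 1) = f y" if "y mod int N = x mod int N" for y
  proof -
    define q where "q = y div int N - x div int N"
    have y: "y = x + int N * q" using modeq_shift[OF that] q_def by simp
    have a: "f y = f x + int N * q" using skew_mult[OF skew] y by simp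
    have b: "f (y + 1) = f (x + 1) + int N * q" using skew_mult[OF skew, of "x+1" q] y by (simp add: algebra_simps)
    have c: "f (y - 1) = f (x - 1) + int N * q" using skew_mult[OF skew, of "x-1" q] y by (simp add: algebra_simps)
    show ?thesis using a b c x1 x2 x3 y by simp
  qed
  have g_ge: "f y \<le> g y" for y
    using reg mono unfolding g_def by simp
  have gN: "g \<in> NDPF N"
  proof -
    have r: "\<forall>i. g i \<le> i" using reg unfolding g_def by simp
    have m: "\<forall>i j. i \<le> j \<longrightarrow> g i \<le> g j"
    proof (intro allI impI)
      fix i j :: int assume ij: "i \<le> j"
      show "g i \<le> g j"
      proof (cases "i = j")
        case True thus ?thesis by simp
      next
        case False
        hence ij': "i + 1 \<le> j" using ij by simp
        have fi: "f i \<le> f (j + 1)" using mono ij by simp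
        have fj: "f (i+1) \<le> f (j + 1)" "f (i+1) \<le> f j" using mono ij' by simp_all
        have fij: "f i \<le> f j" using mono ij by simp
        show ?thesis unfolding g_def using ij fi fj fij reg[rule_format, of i] by auto
      qed
    qed
    have s: "\<forall>i. g (i + int N) = g i + int N"
    proof
      fix i
      have "f (i + int N + 1) = f (i + 1) + int N" using skew[rule_format, of "i+1"] by (simp add: algebra_simps)
      thus "g (i + int N) = g i + int N" unfolding g_def using skew by (auto simp: min_def)
    qed
    have ns: "\<not> (\<exists>t. t \<noteq> 0 \<and> (\<forall>i. g i = i - t))"
    proof
      assume "\<exists>t. t \<noteq> 0 \<and> (\<forall>i. g i = i - t)"
      then obtain t where t: "t \<noteq> 0" "\<forall>i. g i = i - t" by blast
      have ne1: "(x + 1) mod int N \<noteq> x mod int N"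
      proof
        assume "(x + 1) mod int N = x mod int N"
        hence "(x + 1 - x) mod int N = 0" by (simp add: mod_eq_dvd_iff)
        thus False using N by simp
      qed
      have "g (x + 1) = f (x + 1)" unfolding g_def using ne1 by simp
      hence fx1: "f (x + 1) = x + 1 - t" using t(2) by simp
      have "g x = min x (x + 1 - t)" unfolding g_def using fx1 by simp
      hence "min x (x + 1 - t) = x - t" using t(2) by simp
      thus False using t(1) by linarith
    qed
    show ?thesis using r m s ns unfolding NDPF_def by blast
  qed
  define i where "i = nat ((x - 1) mod int N)"
  have iN: "i < N" unfolding i_def using Npos by (simp add: nat_less_iff)
  have ii: "int ((i + 1) mod N) = x mod int N"
  proof -
    have "int i = (x - 1) mod int N" unfolding i_def using Npos by simp
    hence "int ((i + 1) mod N) = ((x - 1) mod int N + 1) mod int N" by (simp add: zmod_int add.commute)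
    also have "\<dots> = x mod int N" by (simp add: mod_add_left_eq)
    finally show ?thesis .
  qed
  have feq: "f = mul (fgen N i) g"
  proof (rule ext)
    fix y
    show "f y = mul (fgen N i) g y"
    proof (cases "y mod int N = x mod int N")
      case True
      have fy: "fgen N i y = y - 1" unfolding fgen_def using True ii by simp
      have "(y - 1) mod int N = int i" using modL1[OF Npos iN] True ii by simp
      hence "(y - 1) mod int N \<noteq> x mod int N" using modneq[of N i] N iN ii by simp
      hence "g (y - 1) = f (y - 1)" unfolding g_def by simp
      thus ?thesis using fy cls[OF True] by (simp add: mul_def)
    next
      case False
      have fy: "fgen N i y = y" unfolding fgen_def using False ii by simp
      thus ?thesis using False by (simp add: mul_def g_def)
    qed
  qed
  have D0: "0 \<le> DD N g" unfolding DD_def using gN unfolding NDPF_def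
    by (intro sum_nonneg) auto
  have Dlt: "DD N g < DD N f"
  proof -
    define y0 where "y0 = x mod int N"
    have y0in: "y0 \<in> {0..<int N}" using Npos y0_def by simp
    have y0c: "y0 mod int N = x mod int N" using y0_def by simp
    have "f y0 < g y0" using cls[OF y0c] y0c unfolding g_def by simp
    hence "y0 - g y0 < y0 - f y0" by simp
    moreover have "\<forall>y\<in>{0..<int N}. y - g y \<le> y - f y" using g_ge by simp
    ultimately show ?thesis unfolding DD_def using y0in
      by (intro sum_strict_mono_ex1) auto
  qed
  show ?thesis using gN iN feq D0 Dlt by blast
qed

lemma gen:
  assumes N: "N \<ge> 3"
  shows "f \<in> NDPF N \<Longrightarrow> \<exists>w. set w \<subseteq> {..<N} \<and> f = word N w"
proof (induction "nat (DD N f)" arbitrary: f rule: less_induct)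
  case less
  show ?case
  proof (cases "f = id")
    case True thus ?thesis by (intro exI[of _ "[]"]) simp
  next
    case False
    obtain g i where g: "g \<in> NDPF N" "i < N" "f = mul (fgen N i) g" "0 \<le> DD N g" "DD N g < DD N f"
      using step[OF less.prems N False] by blast
    have "nat (DD N g) < nat (DD N f)" using g(4,5) by simp
    then obtain w where w: "set w \<subseteq> {..<N}" "g = word N w" using less.hyps g(1) by blast
    show ?thesis using w g(2,3) by (intro exI[of _ "i # w"]) simp
  qed
qed


theorem mainTheorem6:
  fixes N :: nat
  assumes "N \<ge> 3"
  shows "NDPF N = {word N w | w. set w \<subseteq> {..<N}}
       \<and> (\<forall>i<N. mul (fgen N i) (fgen N i) = fgen N i)
       \<and> (\<forall>i<N. \<forall>j<N. j \<noteq> (i + 1) mod N \<and> i \<noteq> (j + 1) mod N \<longrightarrow>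
              mul (fgen N i) (fgen N j) = mul (fgen N j) (fgen N i))
       \<and> (\<forall>i<N. mul (mul (fgen N i) (fgen N ((i + 1) mod N))) (fgen N i)
                 = mul (fgen N ((i + 1) mod N)) (fgen N i)
             \<and> mul (mul (fgen N ((i + 1) mod N)) (fgen N i)) (fgen N ((i + 1) mod N))
                 = mul (fgen N ((i + 1) mod N)) (fgen N i))"
proof -
  have N2: "N \<ge> 2" using assms by simp
  have "NDPF N = {word N w | w. set w \<subseteq> {..<N}}"
  proof (rule set_eqI, rule iffI)
    fix f assume "f \<in> NDPF N"
    then obtain w where "set w \<subseteq> {..<N}" "f = word N w" using gen[OF assms] by blast
    thus "f \<in> {word N w | w. set w \<subseteq> {..<N}}" by blast
  next
    fix f assume "f \<in> {word N w | w. set w \<subseteq> {..<N}}"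
    then obtain w where "set w \<subseteq> {..<N}" "f = word N w" by blast
    thus "f \<in> NDPF N" using word_in[OF N2] by simp
  qed
  moreover have "\<forall>i<N. mul (fgen N i) (fgen N i) = fgen N i" using idem[OF N2] by blast
  moreover have "\<forall>i<N. \<forall>j<N. j \<noteq> (i + 1) mod N \<and> i \<noteq> (j + 1) mod N \<longrightarrow>
              mul (fgen N i) (fgen N j) = mul (fgen N j) (fgen N i)" using comm[OF N2] by blast
  moreover have "\<forall>i<N. mul (mul (fgen N i) (fgen N ((i + 1) mod N))) (fgen N i)
                 = mul (fgen N ((i + 1) mod N)) (fgen N i)
             \<and> mul (mul (fgen N ((i + 1) mod N)) (fgen N i)) (fgen N ((i + 1) mod N))
                 = mul (fgen N ((i + 1) mod N)) (fgen N i)" using braid[OF assms] by blast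
  ultimately show ?thesis by (intro conjI)
qed

end
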